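(* (i) The equation $x^4-y^4=iz^2$ has only trivial solutions in Gaussian integers $x,y,z\in\mathbb{Z}[i]$, i.e. every solution satisfies $xyz=0$. (ii) The only nontrivial solutions $(x,y,z)\in\mathbb{Z}[i]^3$ (i.e. with $xyz\neq 0$) of the equation $x^4+y^4=iz^2$ satisfying $\gcd(x,y,z)=1$ are the triples $(x,y,z)$ with $x,y\in\{\pm i,\pm 1\}$ and $z=\pm i(1+i)$.
   Context: Here $i=\sqrt{-1}$ and $\mathbb{Z}[i]$ denotes the ring of Gaussian integers. A solution $(x,y,z)$ is called trivial if $xyz=0$. *)

theory Defs
  imports Complex_Main
begin

definition gauss_ints :: "complex set" where
  "gauss_ints = {of_int a + of_int b * \<i> | a b. True}"

definition gdvd :: "complex \<Rightarrow> complex \<Rightarrow> bool" where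
  "gdvd d x \<longleftrightarrow> (\<exists>k\<in>gauss_ints. x = d * k)"

definition gunit :: "complex \<Rightarrow> bool" where
  "gunit u \<longleftrightarrow> u \<in> gauss_ints \<and> gdvd u 1"

definition gcoprime3 :: "complex \<Rightarrow> complex \<Rightarrow> complex \<Rightarrow> bool" where
  "gcoprime3 x y z \<longleftrightarrow>
     (\<forall>d\<in>gauss_ints. gdvd d x \<and> gdvd d y \<and> gdvd d z \<longrightarrow> gunit d)"

end

theory Submission
  imports Defs "HOL-Computational_Algebra.Euclidean_Algorithm"
begin


datatype gi = Gi (gre: int) (gim: int)

lemma gi_eq_iff: "x = y \<longleftrightarrow> gre x = gre y \<and> gim x = gim y"
  by (cases x; cases y) auto

instantiation gi :: comm_ring_1
begin
definition "0 = Gi 0 0"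
definition "1 = Gi 1 0"
definition "x + y = Gi (gre x + gre y) (gim x + gim y)"
definition "x - y = Gi (gre x - gre y) (gim x - gim y)"
definition "- x = Gi (- gre x) (- gim x)"
definition "x * y = Gi (gre x * gre y - gim x * gim y) (gre x * gim y + gim x * gre y)"
instance
  by intro_classes (auto simp: gi_eq_iff zero_gi_def one_gi_def plus_gi_def minus_gi_def
      uminus_gi_def times_gi_def algebra_simps)
end

lemma gi_simps [simp]:
  "gre 0 = 0" "gim 0 = 0" "gre 1 = 1" "gim 1 = 0"
  "gre (x + y) = gre x + gre y" "gim (x + y) = gim x + gim y"
  "gre (x - y) = gre x - gre y" "gim (x - y) = gim x - gim y"
  "gre (- x) = - gre x" "gim (- x) = - gim x"
  "gre (x * y) = gre x * gre y - gim x * gim y" "gim (x * y) = gre x * gim y + gim x * gre y"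
  by (simp_all add: zero_gi_def one_gi_def plus_gi_def minus_gi_def uminus_gi_def times_gi_def)

lemma gi_of_nat [simp]: "gre (of_nat n) = of_nat n" "gim (of_nat n) = 0"
  by (induction n) simp_all

lemma gi_of_int [simp]: "gre (of_int n) = n" "gim (of_int n) = 0"
  by (cases n; simp)+

lemma gi_numeral [simp]: "gre (numeral n) = numeral n" "gim (numeral n) = 0"
  using gi_of_nat[of "numeral n"] by simp_all

instance gi :: idom
proof
  fix a b :: gi assume "a \<noteq> 0" "b \<noteq> 0"
  show "a * b \<noteq> 0"
  proof
    assume ab: "a * b = 0"
    let ?N = "\<lambda>z::gi. gre z ^ 2 + gim z ^ 2"
    have "?N (a*b) = ?N a * ?N b" by (simp add: power2_eq_square algebra_simps)
    moreover have "?N a \<noteq> 0" using \<open>a \<noteq> 0\<close> by (auto simp: gi_eq_iff)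
    moreover have "?N b \<noteq> 0" using \<open>b \<noteq> 0\<close> by (auto simp: gi_eq_iff)
    moreover have "?N (a*b) = 0" using ab by simp
    ultimately show False by (metis mult_eq_0_iff)
  qed
qed


definition gn :: "gi \<Rightarrow> int" where "gn z = gre z ^ 2 + gim z ^ 2"
definition gcnj :: "gi \<Rightarrow> gi" where "gcnj z = Gi (gre z) (- gim z)"

lemma gcnj_simps [simp]: "gre (gcnj z) = gre z" "gim (gcnj z) = - gim z"
  by (simp_all add: gcnj_def)

lemma gn_gcnj [simp]: "gn (gcnj z) = gn z"
  by (simp add: gn_def)

lemma gn_mult: "gn (a * b) = gn a * gn b"
  by (simp add: gn_def power2_eq_square algebra_simps)

lemma gn_nonneg [simp]: "gn z \<ge> 0"
  by (simp add: gn_def)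

lemma gn_eq_0_iff [simp]: "gn z = 0 \<longleftrightarrow> z = 0"
  by (auto simp: gn_def gi_eq_iff)

lemma gn_pos: "z \<noteq> 0 \<Longrightarrow> gn z > 0"
  using gn_nonneg[of z] gn_eq_0_iff[of z] by linarith

lemma mult_gcnj: "z * gcnj z = of_int (gn z)"
  by (simp add: gi_eq_iff gn_def power2_eq_square)

definition rd :: "int \<Rightarrow> int \<Rightarrow> int" where "rd p q = (2 * p + q) div (2 * q)"

lemma rd_exact: "q > 0 \<Longrightarrow> rd (k * q) q = k"
proof -
  assume q: "q > 0"
  have e: "2 * (k * q) + q = q + k * (2 * q)" by (simp add: algebra_simps)
  have "rd (k * q) q = (q + k * (2*q)) div (2*q)" unfolding rd_def by (metis e)
  also have "\<dots> = q div (2*q) + k" using q by simp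
  also have "q div (2*q) = 0" using q by (simp add: div_pos_pos_trivial)
  finally show ?thesis by simp
qed

lemma rd_bound: "q > 0 \<Longrightarrow> \<bar>2 * (p - q * rd p q)\<bar> \<le> q"
proof -
  assume q: "q > 0"
  define r where "r = rd p q"
  have d: "(2*p+q) div (2*q) * (2*q) + (2*p+q) mod (2*q) = 2*p+q" by (rule div_mult_mod_eq)
  have m1: "(2*p+q) mod (2*q) \<ge> 0" "(2*p+q) mod (2*q) < 2*q" using q by simp_all
  have "(2*p+q) div (2*q) * (2*q) \<le> 2*p+q" using d m1 by linarith
  moreover have "2*p+q < ((2*p+q) div (2*q) + 1) * (2*q)"
    using d m1 by (simp add: distrib_right)
  ultimately have "r * (2*q) \<le> 2*p+q" "2*p+q < (r+1)*(2*q)" by (simp_all add: r_def rd_def)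
  thus ?thesis unfolding r_def[symmetric] by (simp add: algebra_simps abs_le_iff)
qed

instantiation gi :: idom_modulo
begin
definition "x div y = Gi (rd (gre (x * gcnj y)) (gn y)) (rd (gim (x * gcnj y)) (gn y))"
definition "x mod y = x - (x div (y::gi)) * y"
instance
proof
  fix x y :: gi
  show "x div 0 = 0" by (simp add: divide_gi_def gi_eq_iff rd_def gn_def)
  show "x div y * y + x mod y = x" by (simp add: modulo_gi_def)
  assume y: "y \<noteq> 0"
  have "x * y * gcnj y = x * of_int (gn y)" by (simp add: mult_gcnj mult.assoc)
  thus "x * y div y = x" using gn_pos[OF y]
    by (simp add: divide_gi_def gi_eq_iff rd_exact mult.commute)
qed
end

lemma gn_sq_bound:
  fixes a b q :: int assumes "q > 0" "\<bar>2*a\<bar> \<le> q" "\<bar>2*b\<bar> \<le> q"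
  shows "a^2 + b^2 < q^2"
proof -
  have "\<bar>2*a\<bar>^2 \<le> q^2" by (rule power_mono[OF assms(2)]) simp
  moreover have "\<bar>2*b\<bar>^2 \<le> q^2" by (rule power_mono[OF assms(3)]) simp
  ultimately have "(2*a)^2 \<le> q^2" "(2*b)^2 \<le> q^2" by (simp_all only: power2_abs)
  hence "4*(a^2+b^2) \<le> 2*q^2" by (simp add: power_mult_distrib)
  thus ?thesis using assms(1) by (smt (verit) zero_less_power)
qed

instantiation gi :: euclidean_ring
begin
definition "euclidean_size x = nat (gn x)"
instance
proof
  show "euclidean_size (0::gi) = 0" by (simp add: euclidean_size_gi_def gn_def)
next
  fix x y :: gi assume y: "y \<noteq> 0"
  define Y where "Y = gn y"
  have Y: "Y > 0" using gn_pos[OF y] by (simp add: Y_def)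
  define R where "R = gre (x * gcnj y)"
  define I where "I = gim (x * gcnj y)"
  have e: "(x mod y) * gcnj y = x * gcnj y - (x div y) * of_int Y"
    by (simp add: modulo_gi_def Y_def mult_gcnj[symmetric] algebra_simps)
  have "gn (x mod y) * Y = gn ((x mod y) * gcnj y)"
    by (simp add: gn_mult Y_def)
  also have "\<dots> = (R - Y * rd R Y)^2 + (I - Y * rd I Y)^2"
  proof -
    have g: "gn (z - w * of_int Y) = (gre z - Y * gre w)^2 + (gim z - Y * gim w)^2" for z w
      by (simp add: gn_def algebra_simps)
    have "gre (x div y) = rd R Y" "gim (x div y) = rd I Y"
      by (simp_all add: divide_gi_def R_def I_def Y_def)
    thus ?thesis unfolding e g by (simp add: R_def I_def)
  qed
  also have "\<dots> < Y^2" by (rule gn_sq_bound[OF Y rd_bound[OF Y] rd_bound[OF Y]])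
  finally have "gn (x mod y) < Y" using Y by (simp add: power2_eq_square)
  thus "euclidean_size (x mod y) < euclidean_size y"
    using Y by (simp add: euclidean_size_gi_def Y_def)
next
  fix x y :: gi assume y: "y \<noteq> 0"
  have "gn x * 1 \<le> gn x * gn y" using gn_pos[OF y] gn_nonneg[of x]
    by (intro mult_left_mono) simp_all
  thus "euclidean_size x \<le> euclidean_size (x * y)"
    by (simp add: euclidean_size_gi_def gn_mult)
qed
end


definition ii :: gi where "ii = Gi 0 1"

lemma ii_simps [simp]: "gre ii = 0" "gim ii = 1"
  by (simp_all add: ii_def)

lemma ii_sq: "ii * ii = -1"
  by (simp add: gi_eq_iff)

lemma gn_one_iff: "gn z = 1 \<longleftrightarrow> z = 1 \<or> z = -1 \<or> z = ii \<or> z = -ii"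
proof
  assume h: "gn z = 1"
  have a: "gre z ^ 2 + gim z ^ 2 = 1" using h by (simp add: gn_def)
  have "gre z ^ 2 \<le> 1" "gim z ^ 2 \<le> 1" using a zero_le_power2[of "gre z"] zero_le_power2[of "gim z"]
    by linarith+
  hence "\<bar>gre z\<bar> \<le> 1" "\<bar>gim z\<bar> \<le> 1" by (simp_all add: abs_square_le_1)
  hence "gre z \<in> {-1,0,1}" "gim z \<in> {-1,0,1}" by auto
  thus "z = 1 \<or> z = -1 \<or> z = ii \<or> z = -ii" using a by (auto simp: gi_eq_iff)
qed (auto simp: gn_def)

lemma is_unit_gi_iff: "is_unit (z::gi) \<longleftrightarrow> gn z = 1"
proof
  assume "is_unit z"
  then obtain w where "1 = z * w" by (auto elim: dvdE)
  hence "gn z * gn w = 1" by (metis gn_mult gn_def gi_simps(3,4) power_one zero_power2 add.right_neutral)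
  thus "gn z = 1" using gn_nonneg[of z] gn_nonneg[of w] by (simp add: zmult_eq_1_iff) 
next
  assume "gn z = 1"
  hence "z * gcnj z = 1" by (simp add: mult_gcnj)
  thus "is_unit z" by (metis dvd_triv_left)
qed

lemma is_unit_gi_cases: "is_unit (z::gi) \<longleftrightarrow> z = 1 \<or> z = -1 \<or> z = ii \<or> z = -ii"
  by (simp add: is_unit_gi_iff gn_one_iff)

definition guf :: "gi \<Rightarrow> gi" where
  "guf z = (if z = 0 then 0 else if gre z > 0 \<and> gim z \<ge> 0 then 1
     else if gre z \<le> 0 \<and> gim z > 0 then ii else if gre z < 0 \<and> gim z \<le> 0 then -1 else -ii)"

lemma guf_neg: "guf (- b) = - guf b"
  by (simp add: guf_def gi_eq_iff; linarith)
lemma guf_ii: "guf (ii * b) = ii * guf b"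
  by (simp add: guf_def gi_eq_iff; linarith)

lemma guf_unit: "z \<noteq> 0 \<Longrightarrow> gn (guf z) = 1"
  by (simp add: guf_def gn_def)

instantiation gi :: normalization_semidom
begin
definition "unit_factor z = guf z"
definition "normalize z = gcnj (guf z) * z"
instance
proof
  show "unit_factor (0::gi) = 0" by (simp add: unit_factor_gi_def guf_def)
  show "normalize (0::gi) = 0" by (simp add: normalize_gi_def)
next
  fix a :: gi
  assume "is_unit a"
  hence "a = 1 \<or> a = -1 \<or> a = ii \<or> a = -ii" by (simp add: is_unit_gi_cases)
  thus "unit_factor a = a" by (auto simp: unit_factor_gi_def guf_def gi_eq_iff)
next
  fix a :: gi assume "a \<noteq> 0"
  thus "is_unit (unit_factor a)" by (simp add: unit_factor_gi_def is_unit_gi_iff guf_unit)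
next
  fix a b :: gi
  assume "is_unit a"
  hence "a = 1 \<or> a = -1 \<or> a = ii \<or> a = -ii" by (simp add: is_unit_gi_cases)
  thus "unit_factor (a * b) = a * unit_factor b"
    using guf_neg[of b] guf_ii[of b] guf_neg[of "ii * b"]
    by (auto simp: unit_factor_gi_def)
next
  fix a :: gi
  show "unit_factor a * normalize a = a"
  proof (cases "a = 0")
    case False
    have "guf a * gcnj (guf a) = 1" using guf_unit[OF False] by (simp add: mult_gcnj)
    thus ?thesis by (simp add: unit_factor_gi_def normalize_gi_def mult.assoc[symmetric])
  qed (simp add: normalize_gi_def)
qed
end

instance gi :: normalization_euclidean_semiring ..

instantiation gi :: euclidean_ring_gcd
begin
definition "gcd_gi = (Euclidean_Algorithm.gcd :: gi \<Rightarrow> _)"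
definition "lcm_gi = (Euclidean_Algorithm.lcm :: gi \<Rightarrow> _)"
definition "Gcd_gi = (Euclidean_Algorithm.Gcd :: gi set \<Rightarrow> _)"
definition "Lcm_gi = (Euclidean_Algorithm.Lcm :: gi set \<Rightarrow> _)"
instance by standard (simp_all add: gcd_gi_def lcm_gi_def Gcd_gi_def Lcm_gi_def)
end



definition gpi :: gi where "gpi = Gi 1 1"

lemma pi_simps [simp]: "gre gpi = 1" "gim gpi = 1"
  by (simp_all add: gpi_def)

lemma gi_power2_simps [simp]:
  "gre (z ^ 2) = gre z ^ 2 - gim z ^ 2" "gim (z ^ 2) = 2 * gre z * gim z"
  by (simp_all add: power2_eq_square)

lemma gi_power4: "(z::gi) ^ 4 = (z ^ 2) ^ 2"
  using power_mult[of z 2 2] by simp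

lemma pi_dvd_iff: "gpi dvd z \<longleftrightarrow> even (gre z + gim z)"
proof
  assume "gpi dvd z"
  then obtain w where "z = gpi * w" by (auto elim: dvdE)
  thus "even (gre z + gim z)" by simp
next
  assume e: "even (gre z + gim z)"
  have "even (gim z - gre z)" using e by (metis even_add even_diff)
  then obtain b where b: "gim z - gre z = 2 * b" by (rule evenE)
  obtain a where a: "gre z + gim z = 2 * a" using e by (rule evenE)
  have "z = gpi * Gi a b" using a b by (simp add: gi_eq_iff; linarith)
  thus "gpi dvd z" by simp
qed

lemma of_int_dvd_gi_iff: "(of_int k :: gi) dvd z \<longleftrightarrow> k dvd gre z \<and> k dvd gim z"
proof
  assume "of_int k dvd z"
  then obtain w where "z = of_int k * w" by (auto elim: dvdE)
  thus "k dvd gre z \<and> k dvd gim z" by simp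
next
  assume "k dvd gre z \<and> k dvd gim z"
  then obtain a b where "gre z = k * a" "gim z = k * b" by (auto elim!: dvdE)
  hence "z = of_int k * Gi a b" by (simp add: gi_eq_iff)
  thus "of_int k dvd z" by simp
qed

lemma numeral_dvd_gi_iff: "(numeral k :: gi) dvd z \<longleftrightarrow> (numeral k::int) dvd gre z \<and> (numeral k::int) dvd gim z"
  using of_int_dvd_gi_iff[of "numeral k" z] by simp

lemma gpi_nz [simp]: "gpi \<noteq> 0" by (simp add: gi_eq_iff)

lemma gn_pi [simp]: "gn gpi = 2" by (simp add: gn_def)

lemma pi_not_unit: "\<not> is_unit gpi" by (simp add: is_unit_gi_iff)

lemma prime_elem_pi: "prime_elem gpi"
proof (rule prime_elemI)
  show "gpi \<noteq> 0" by (simp add: gi_eq_iff)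
  show "\<not> gpi dvd 1" using pi_not_unit .
  fix a b :: gi
  assume "gpi dvd a * b"
  hence "even ((gre a * gre b - gim a * gim b) + (gre a * gim b + gim a * gre b))"
    by (simp add: pi_dvd_iff)
  moreover have "(gre a * gre b - gim a * gim b) + (gre a * gim b + gim a * gre b)
     = (gre a + gim a) * (gre b + gim b) - 2 * (gim a * gim b)" by (simp add: algebra_simps)
  ultimately have "even ((gre a + gim a) * (gre b + gim b))" by simp
  thus "gpi dvd a \<or> gpi dvd b" by (simp add: pi_dvd_iff)
qed

lemma pi_sq: "gpi ^ 2 = 2 * ii" by (simp add: gi_eq_iff)
lemma two_eq_pi: "(2::gi) = - ii * gpi ^ 2" by (simp add: gi_eq_iff)
lemma pi4: "gpi ^ 4 = - 4" unfolding gi_power4 pi_sq by (simp add: gi_eq_iff power2_eq_square)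
lemma pi6: "gpi ^ 6 = - 8 * ii"
proof -
  have "gpi ^ 6 = (gpi ^ 2) ^ 3" using power_mult[of gpi 2 3] by simp
  thus ?thesis unfolding pi_sq by (simp add: gi_eq_iff power3_eq_cube)
qed


lemma even_gim_sq: "even (gim ((z::gi) ^ 2))" by simp

lemma even_gre_sq_iff: "even (gre ((z::gi) ^ 2)) \<longleftrightarrow> even (gre z + gim z)"
proof -
  have "gre (z^2) = (gre z + gim z) * (gre z - gim z)" by (simp add: power2_eq_square algebra_simps)
  moreover have "even (gre z - gim z) \<longleftrightarrow> even (gre z + gim z)" by simp
  ultimately show ?thesis by simp
qed

lemma even_gim_4: "even (gim ((z::gi) ^ 4))" unfolding gi_power4 by (rule even_gim_sq)

lemma even_gre_4_iff: "even (gre ((z::gi) ^ 4)) \<longleftrightarrow> even (gre z + gim z)"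
proof -
  have "even (gre ((z^2)^2)) \<longleftrightarrow> even (gre (z^2) + gim (z^2))" by (rule even_gre_sq_iff)
  also have "\<dots> \<longleftrightarrow> even (gre (z^2))" using even_gim_sq[of z] by (metis even_add)
  also have "\<dots> \<longleftrightarrow> even (gre z + gim z)" by (rule even_gre_sq_iff)
  finally show ?thesis unfolding gi_power4 .
qed

lemma odd_sq_mod4:
  assumes "odd (gre z + gim z)"
  shows "4 dvd gim ((z::gi) ^ 2) \<and> (gre (z ^ 2) mod 4 = 1 \<or> gre (z ^ 2) mod 4 = 3)"
proof -
  have "(even (gre z) \<and> odd (gim z)) \<or> (odd (gre z) \<and> even (gim z))" using assms by auto
  thus ?thesis
  proof
    assume "even (gre z) \<and> odd (gim z)"
    then obtain k l where "gre z = 2*k" "gim z = 2*l+1" by (meson evenE oddE)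
    moreover have "(4*k^2 - (4*l^2 + 4*l + 1)) mod 4 = 3" by presburger
    ultimately show ?thesis by (simp add: power2_eq_square algebra_simps)
  next
    assume "odd (gre z) \<and> even (gim z)"
    then obtain k l where "gim z = 2*k" "gre z = 2*l+1" by (meson evenE oddE)
    moreover have "((4*l^2 + 4*l + 1) - 4*k^2) mod 4 = 1" by presburger
    ultimately show ?thesis by (simp add: power2_eq_square algebra_simps)
  qed
qed

lemma odd_4_mod4:
  assumes "odd (gre z + gim z)"
  shows "4 dvd gim ((z::gi) ^ 4) \<and> gre (z ^ 4) mod 4 = 1"
proof -
  from odd_sq_mod4[OF assms] have "4 dvd gim (z^2)" by blast
  then obtain s where s: "gim (z^2) = 4 * s" by (rule dvdE)
  have "odd (gre (z^2))" using assms even_gre_sq_iff[of z] by blast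
  then obtain r where r: "gre (z^2) = 2*r+1" by (rule oddE)
  have "gre (z^4) = (2*r+1)^2 - (4*s)^2" "gim (z^4) = 2 * (2*r+1) * (4*s)"
    unfolding gi_power4 gi_power2_simps(1)[of "z^2"] gi_power2_simps(2)[of "z^2"] r s by simp_all
  moreover have "((2*r+1)^2 - (4*s)^2) mod 4 = 1"
  proof -
    have "(2*r+1)^2 - (4*s)^2 = 1 + 4 * (r^2 + r - 4*s^2)" by (simp add: power2_eq_square algebra_simps)
    thus ?thesis by presburger
  qed
  ultimately show ?thesis by simp
qed

lemma sq_mod4_ne2: "gre ((w::gi) ^ 2) mod 4 \<noteq> 2"
proof -
  have sq: "a^2 mod 4 = 0 \<or> a^2 mod 4 = 1" for a :: int
  proof (cases "even a")
    case True
    then obtain k where "a = 2*k" by (rule evenE)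
    hence "a^2 = 4 * k^2" by (simp add: power2_eq_square)
    thus ?thesis by simp
  next
    case False
    then obtain k where "a = 2*k+1" by (rule oddE)
    hence "a^2 = 1 + 4 * (k^2 + k)" by (simp add: power2_eq_square algebra_simps)
    thus ?thesis by presburger
  qed
  have "(a^2 - b^2) mod 4 \<noteq> 2" for a b :: int
  proof -
    have "(a^2 - b^2) mod 4 = (a^2 mod 4 - b^2 mod 4) mod 4"
      by (simp add: mod_diff_eq)
    thus ?thesis using sq[of a] sq[of b] by auto
  qed
  thus ?thesis by simp
qed


lemma gim_ii_mult: "gim (ii * w) = gre w" "gre (ii * w) = - gim w"
  by simp_all

lemma P1:
  assumes e: "a^4 + \<delta> * b^4 = \<kappa> * c^2" and d: "\<delta> = 1 \<or> \<delta> = -1"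
    and k: "\<kappa> = ii \<or> \<kappa> = -ii" and c: "\<not> gpi dvd (c::gi)"
  shows False
proof -
  have g: "gim (a^4 + \<delta> * b^4) = gim (\<kappa> * c^2)" using e by simp
  have l: "even (gim (a^4 + \<delta> * b^4))"
    using d even_gim_4[of a] even_gim_4[of b] by (auto simp del: gi_power2_simps)
  have "odd (gre (c^2))" using c even_gre_sq_iff[of c] pi_dvd_iff[of c] by blast
  hence r: "odd (gim (\<kappa> * c^2))" using k by (auto simp del: gi_power2_simps)
  show False using g l r by simp
qed

lemma P2:
  assumes "\<not> gpi dvd X" "\<not> gpi dvd Y" shows "X^4 + Y^4 \<noteq> (W::gi)^2"
proof
  assume e: "X^4 + Y^4 = W^2"
  have "gre (X^4) mod 4 = 1" "gre (Y^4) mod 4 = 1"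
    using odd_4_mod4[of X] odd_4_mod4[of Y] assms by (simp_all add: pi_dvd_iff del: gi_power2_simps)
  hence "gre (X^4 + Y^4) mod 4 = 2" by (simp del: gi_power2_simps add: mod_add_eq[symmetric])
  thus False using e sq_mod4_ne2[of W] by (simp del: gi_power2_simps)
qed


lemma gn_ge2: "p \<noteq> 0 \<Longrightarrow> \<not> is_unit p \<Longrightarrow> gn p \<ge> 2"
  using gn_pos[of p] is_unit_gi_iff[of p] by linarith

lemma coprime_power_split:
  fixes a b c :: gi
  assumes "coprime a b" "a * b = c ^ n" "n > 0"
  shows "\<exists>u v s t. u * v = 1 \<and> a = u * s ^ n \<and> b = v * t ^ n \<and> c = s * t"
  using assms
proof (induction "nat (gn c)" arbitrary: a b c rule: less_induct)
  case less
  note cop = less.prems(1) and eq = less.prems(2) and n = less.prems(3)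
  show ?case
  proof (cases "c = 0")
    case True
    then have "a * b = 0" using eq n by simp
    then have "a = 0 \<or> b = 0" by simp
    thus ?thesis
    proof
      assume a0: "a = 0"
      with cop have "is_unit b" by simp
      then obtain w where w: "1 = b * w" by (rule dvdE)
      have "w * b = 1 \<and> a = w * 0 ^ n \<and> b = b * 1 ^ n \<and> c = 0 * 1"
        using a0 True w n by (simp add: mult.commute)
      thus ?thesis by blast
    next
      assume b0: "b = 0"
      with cop have "is_unit a" by simp
      then obtain w where w: "1 = a * w" by (rule dvdE)
      have "a * w = 1 \<and> a = a * 1 ^ n \<and> b = w * 0 ^ n \<and> c = 1 * 0"
        using b0 True w n by (simp add: mult.commute)
      thus ?thesis by blast
    qed
  next
    case c0: False
    show ?thesis
    proof (cases "is_unit c")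
      case True
      then have "is_unit (a*b)" using eq by (simp add: is_unit_power_iff)
      then have ua: "is_unit a" by (simp add: is_unit_mult_iff)
      then obtain w where w: "1 = a * w" by (rule dvdE)
      have "b = w * c ^ n" using w eq by (metis mult.assoc mult.commute mult_1)
      hence "a * w = 1 \<and> a = a * 1 ^ n \<and> b = w * c ^ n \<and> c = 1 * c" using w by simp
      thus ?thesis by blast
    next
      case nu: False
      obtain p where p: "p dvd c" "prime p" using prime_divisor_exists[OF c0 nu] by blast
      from p(1) obtain c' where c': "c = p * c'" by (rule dvdE)
      have pe: "prime_elem p" using p(2) by simp
      have p0: "p \<noteq> 0" and pnu: "\<not> is_unit p" using pe by (auto simp: prime_elem_def)
      have c'0: "c' \<noteq> 0" using c0 c' by simp
      have lt: "nat (gn c') < nat (gn c)"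
        using gn_ge2[OF p0 pnu] gn_pos[OF c'0] c' by (simp add: gn_mult)
      have cn: "c ^ n = p ^ n * c' ^ n" using c' by (simp add: power_mult_distrib)
      have "p dvd a * b" using p(1) n eq by (metis dvd_power dvd_trans)
      hence "p dvd a \<or> p dvd b" using pe by (simp add: prime_elem_dvd_mult_iff)
      thus ?thesis
      proof
        assume pa: "p dvd a"
        have "\<not> p dvd b" using pa cop pnu coprime_common_divisor by blast
        hence "coprime (p ^ n) b" using pe by (simp add: prime_elem_imp_coprime)
        moreover have "p ^ n dvd a * b" using eq cn by simp
        ultimately have "p ^ n dvd a" by (simp add: coprime_dvd_mult_left_iff)
        then obtain a' where a': "a = p ^ n * a'" by (rule dvdE)
        have "p ^ n * (a' * b) = p ^ n * c' ^ n" using eq cn a' by (simp add: mult.assoc)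
        hence e': "a' * b = c' ^ n" using p0 by simp
        have cop': "coprime a' b" using cop a' by simp
        obtain u v s t where h: "u * v = 1" "a' = u * s ^ n" "b = v * t ^ n" "c' = s * t"
          using less.hyps[OF lt cop' e' n] by blast
        have "u * v = 1 \<and> a = u * (p*s) ^ n \<and> b = v * t ^ n \<and> c = (p*s) * t"
          using h a' c' by (simp add: power_mult_distrib algebra_simps)
        thus ?thesis by blast
      next
        assume pb: "p dvd b"
        have "\<not> p dvd a" using pb cop pnu coprime_common_divisor by blast
        hence "coprime (p ^ n) a" using pe by (simp add: prime_elem_imp_coprime)
        moreover have "p ^ n dvd b * a" using eq cn by (simp add: mult.commute)
        ultimately have "p ^ n dvd b" by (simp add: coprime_dvd_mult_left_iff)
        then obtain b' where b': "b = p ^ n * b'" by (rule dvdE)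
        have "p ^ n * (a * b') = p ^ n * c' ^ n" using eq cn b' by (simp add: algebra_simps)
        hence e': "a * b' = c' ^ n" using p0 by simp
        have cop': "coprime a b'" using cop b' by simp
        obtain u v s t where h: "u * v = 1" "a = u * s ^ n" "b' = v * t ^ n" "c' = s * t"
          using less.hyps[OF lt cop' e' n] by blast
        have "u * v = 1 \<and> a = u * s ^ n \<and> b = v * (p*t) ^ n \<and> c = s * (p*t)"
          using h b' c' by (simp add: power_mult_distrib algebra_simps)
        thus ?thesis by blast
      qed
    qed
  qed
qed


lemma gn_minus [simp]: "gn (- z) = gn z" by (simp add: gn_def)
lemma gn_ii_mult [simp]: "gn (ii * z) = gn z" by (simp add: gn_def)
lemma gn_one [simp]: "gn 1 = 1" by (simp add: gn_def)
lemma gn_power: "gn (z ^ n) = gn z ^ n"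
  by (induction n) (simp_all add: gn_mult)
lemma gn_numeral [simp]: "gn (numeral k) = (numeral k)^2" by (simp add: gn_def)
lemma gn_unit: "is_unit u \<Longrightarrow> gn u = 1" by (simp add: is_unit_gi_iff)

lemma parallelogram: "gn (a + b) + gn (a - b) = 2 * gn a + 2 * gn b"
  by (simp add: gn_def power2_eq_square algebra_simps)

lemma gn_triangle:
  assumes "gn a = p^2" "gn b = q^2" "p \<ge> 0" "q \<ge> 0"
  shows "gn (a + b) \<le> (p + q)^2"
proof -
  define c where "c = gre a * gre b + gim a * gim b"
  have lag: "c^2 + (gre a * gim b - gim a * gre b)^2 = gn a * gn b"
    by (simp add: c_def gn_def power2_eq_square algebra_simps)
  have "c^2 \<le> gn a * gn b" using lag zero_le_power2[of "gre a * gim b - gim a * gre b"] by linarith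
  hence "c^2 \<le> (p*q)^2" using assms(1,2) by (simp add: power_mult_distrib)
  hence "c \<le> p * q" using assms(3,4)
    by (metis abs_le_square_iff abs_of_nonneg le_cases order_trans abs_ge_self mult_nonneg_nonneg)
  have "gn (a + b) = gn a + gn b + 2 * c" by (simp add: gn_def c_def power2_eq_square algebra_simps)
  also have "\<dots> \<le> (p+q)^2" using \<open>c \<le> p * q\<close> assms(1,2) by (simp add: power2_eq_square algebra_simps)
  finally show ?thesis .
qed

lemma unit_cases: "is_unit (u::gi) \<Longrightarrow> u = 1 \<or> u = -1 \<or> u = ii \<or> u = -ii"
  by (simp add: is_unit_gi_cases)

lemma unit_sq: "is_unit (u::gi) \<Longrightarrow> u ^ 2 = 1 \<or> u ^ 2 = -1"
  by (drule unit_cases) (auto simp: gi_eq_iff)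

lemma unit_pow4: "is_unit (u::gi) \<Longrightarrow> u ^ 4 = 1"
proof -
  assume "is_unit u"
  hence "u^2 = 1 \<or> u^2 = -1" by (rule unit_sq)
  hence "(u^2)^2 = 1" by (metis power_one power2_minus)
  thus ?thesis by (simp only: gi_power4)
qed

lemma unit_inv_sq: "(u::gi) * v = 1 \<Longrightarrow> v ^ 2 = u ^ 2"
proof -
  assume uv: "u * v = 1"
  hence "is_unit u" by (metis dvd_triv_left)
  hence "u ^ 4 = 1" by (rule unit_pow4)
  hence "v^2 = v^2 * u^4" by simp
  also have "\<dots> = (u*v)^2 * u^2" by (simp add: power_mult_distrib algebra_simps numeral_eq_Suc)
  finally show ?thesis using uv by simp
qed

lemma not_coprime_prime:
  assumes "\<not> coprime a (b::gi)" "a \<noteq> 0"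
  obtains p where "prime p" "p dvd a" "p dvd b"
proof -
  obtain c where c: "c dvd a" "c dvd b" "\<not> is_unit c" using assms(1) by (rule not_coprimeE)
  have "c \<noteq> 0" using c(1) assms(2) by auto
  then obtain p where "p dvd c" "prime p" using prime_divisor_exists c(3) by blast
  thus ?thesis using that c by (meson dvd_trans)
qed

lemma C4:
  assumes "\<not> gpi dvd X" "\<not> gpi dvd Y"
  shows "4 dvd (X^2 - Y^2) \<or> 4 dvd (X^2 + (Y::gi)^2)"
proof -
  have x: "4 dvd gim (X^2) \<and> (gre (X^2) mod 4 = 1 \<or> gre (X^2) mod 4 = 3)"
    using odd_sq_mod4[of X] assms(1) by (simp add: pi_dvd_iff del: gi_power2_simps)
  have y: "4 dvd gim (Y^2) \<and> (gre (Y^2) mod 4 = 1 \<or> gre (Y^2) mod 4 = 3)"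
    using odd_sq_mod4[of Y] assms(2) by (simp add: pi_dvd_iff del: gi_power2_simps)
  have "(4 dvd (gre (X^2) - gre (Y^2)) \<and> 4 dvd (gim (X^2) - gim (Y^2))) \<or>
        (4 dvd (gre (X^2) + gre (Y^2)) \<and> 4 dvd (gim (X^2) + gim (Y^2)))"
    using x y by presburger
  thus ?thesis by (simp add: numeral_dvd_gi_iff del: gi_power2_simps)
qed


lemma ii_unit [simp]: "is_unit ii" by (simp add: is_unit_gi_iff gn_def)

lemma ii_ii_mult: "ii * (ii * x) = - (x::gi)" by (simp add: mult.assoc[symmetric] ii_sq)

lemma ii_nz [simp]: "ii \<noteq> 0" by (simp add: gi_eq_iff)

lemma eight_eq: "(8::gi) = gpi ^ 6 * ii"
  by (simp add: pi6 gi_eq_iff)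

lemma pi3_dvd: assumes "gpi ^ 6 dvd (W::gi) ^ 2" shows "gpi ^ 3 dvd W"
proof -
  have "(gpi ^ 3) ^ 2 dvd W ^ 2" using assms by (simp flip: power_mult)
  thus ?thesis by (metis pow_divides_pow_iff zero_less_numeral)
qed

lemma coprime_ab:
  assumes "coprime X Y" "X^2 = a + 2*b" "Y^2 = a - 2*(b::gi)"
  shows "coprime a b"
proof (rule coprimeI)
  fix e assume e: "e dvd a" "e dvd b"
  have "e dvd X^2" "e dvd Y^2" using e assms(2,3) by simp_all
  moreover have "coprime (X^2) (Y^2)" using assms(1) by simp
  ultimately show "is_unit e" using coprime_common_divisor by blast
qed

lemma desc_c:
  fixes X Y W :: gi
  assumes eq: "X^4 - Y^4 = W^2" and nz: "W \<noteq> 0" and X0: "X \<noteq> 0" and Y0: "Y \<noteq> 0"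
    and cop: "coprime X Y" and d4: "4 dvd X^2 - Y^2"
  shows "\<exists>m n W'. m^4 - n^4 = W'^2 \<and> m \<noteq> 0 \<and> n \<noteq> 0 \<and> W' \<noteq> 0 \<and>
            gn m ^ 2 + gn n ^ 2 < gn X ^ 2 + gn Y ^ 2"
proof -
  obtain b where b: "X^2 - Y^2 = 4 * b" using d4 by (rule dvdE)
  define a where "a = X^2 - 2*b"
  have xa: "X^2 = a + 2*b" and ya: "Y^2 = a - 2*b" and s: "X^2 + Y^2 = 2*a"
    using b by (simp_all add: a_def algebra_simps)
  have "W^2 = (X^2 + Y^2) * (X^2 - Y^2)" using eq
    by (simp add: algebra_simps power2_eq_square power4_eq_xxxx)
  also have "\<dots> = 8 * (a * b)" using s b by simp
  finally have w8: "W^2 = gpi ^ 6 * (ii * (a * b))" by (simp add: eight_eq algebra_simps)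
  hence "gpi ^ 3 dvd W" by (intro pi3_dvd) simp
  then obtain d where d: "W = gpi ^ 3 * d" by (rule dvdE)
  have "gpi ^ 6 * d^2 = gpi ^ 6 * (ii * (a * b))"
    using w8 d by (simp add: power_mult_distrib flip: power_mult)
  hence dd: "a * (ii * b) = d ^ 2" by (simp add: algebra_simps)
  have "coprime a b" using coprime_ab[OF cop xa ya] .
  hence cop2: "coprime a (ii * b)" by (simp add: is_unit_right_imp_coprime)
  obtain u v m n where h: "u * v = 1" "a = u * m^2" "ii * b = v * n^2" "d = m * n"
    using coprime_power_split[OF cop2 dd] by auto
  have d0: "d \<noteq> 0" using nz d by simp
  hence m0: "m \<noteq> 0" and n0: "n \<noteq> 0" using h(4) by auto
  have "b = - ii * (ii * b)" by (simp add: mult.assoc[symmetric] ii_sq)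
  hence bb: "b = - ii * v * n^2" using h(3) by (simp add: mult.assoc)
  have vu: "v^2 = u^2" using unit_inv_sq[OF h(1)] .
  have "(X*Y)^2 = (a + 2*b) * (a - 2*b)" using xa ya by (simp add: power_mult_distrib)
  also have "\<dots> = u^2 * (m^4 - (gpi*n)^4)"
  proof -
    have b2: "b^2 = - (v^2 * n^4)" unfolding bb
      by (simp add: power_mult_distrib power2_eq_square power4_eq_xxxx ii_sq algebra_simps ii_ii_mult)
    have a2: "a^2 = u^2 * m^4" unfolding h(2)
      by (simp add: power_mult_distrib power2_eq_square power4_eq_xxxx)
    have p4: "(gpi*n)^4 = - 4 * n^4" by (simp add: power_mult_distrib pi4)
    have "(a + 2*b) * (a - 2*b) = a^2 - 4 * b^2" by (simp add: algebra_simps power2_eq_square)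
    also have "\<dots> = u^2 * m^4 + 4 * (v^2 * n^4)" using a2 b2 by simp
    also have "\<dots> = u^2 * (m^4 - (gpi*n)^4)" using vu p4 by (simp add: algebra_simps)
    finally show ?thesis .
  qed
  finally have key: "(X*Y)^2 = u^2 * (m^4 - (gpi*n)^4)" .
  have u: "is_unit u" using h(1) by (metis dvd_triv_left)
  obtain W' where W': "m^4 - (gpi*n)^4 = W'^2" "W' \<noteq> 0"
  proof (cases "u^2 = 1")
    case True
    thus ?thesis using key X0 Y0 that[of "X*Y"] by simp
  next
    case False
    hence "u^2 = -1" using unit_sq[OF u] by simp
    hence "m^4 - (gpi*n)^4 = (ii*X*Y)^2" using key
      by (simp add: power_mult_distrib ii_sq power2_eq_square algebra_simps ii_ii_mult)
    thus ?thesis using X0 Y0 that[of "ii*X*Y"] by simp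
  qed
  have pn0: "gpi * n \<noteq> 0" using n0 by simp
  have ga: "gn a = gn m ^ 2" using h(2) gn_unit[OF u] by (simp add: gn_mult gn_power)
  have gb: "gn b = gn n ^ 2"
  proof -
    have "gn (ii * b) = gn n ^ 2" using h(3) gn_unit[of v] h(1)
      by (simp add: gn_mult gn_power) (metis dvd_triv_right gn_unit mult.commute mult_1)
    thus ?thesis by simp
  qed
  have "4 * gn a = gn (X^2 + Y^2)" using s by (simp add: gn_mult)
  moreover have "16 * gn b = gn (X^2 - Y^2)" using b by (simp add: gn_mult)
  moreover have "gn (X^2 + Y^2) + gn (X^2 - Y^2) = 2 * gn X ^ 2 + 2 * gn Y ^ 2"
    by (simp add: parallelogram gn_power)
  ultimately have "2 * (gn m ^ 2 + gn (gpi*n) ^ 2) = gn X ^ 2 + gn Y ^ 2"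
    using ga gb by (simp add: gn_mult power_mult_distrib)
  moreover have "gn X ^ 2 + gn Y ^ 2 > 0"
  proof -
    have "gn X ^ 2 > 0" using X0 by simp
    thus ?thesis using zero_le_power2[of "gn Y"] by linarith
  qed
  ultimately have "gn m ^ 2 + gn (gpi*n) ^ 2 < gn X ^ 2 + gn Y ^ 2"
    by (metis add_less_cancel_left add_0_right mult_2 zero_less_double_add_iff_zero_less_single_add)
  thus ?thesis using W' m0 pn0 by blast
qed




lemma odd_odd_pi_dvd:
  assumes "\<not> gpi dvd P" "\<not> gpi dvd Q" shows "gpi dvd P - Q"
  using assms by (simp add: pi_dvd_iff)

lemma pi2_dvd_diff:
  fixes P Q e Y :: gi
  assumes po: "\<not> gpi dvd P" and qo: "\<not> gpi dvd Q"
    and eq: "(P - Q) * (P + Q) = e * Y^4" and y: "gpi dvd Y"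
  shows "gpi^2 dvd P - Q"
proof (rule ccontr)
  assume nd: "\<not> gpi^2 dvd P - Q"
  obtain A1 where A1: "P - Q = gpi * A1" using odd_odd_pi_dvd[OF po qo] by (rule dvdE)
  have a1: "\<not> gpi dvd A1"
  proof
    assume "gpi dvd A1"
    then obtain k where "A1 = gpi * k" by (rule dvdE)
    hence "P - Q = gpi^2 * k" using A1 by (simp add: power2_eq_square mult.assoc)
    thus False using nd by simp
  qed
  define B1 where "B1 = A1 - ii * gpi * Q"
  have pb: "P + Q = gpi * B1"
  proof -
    have "P + Q = (P - Q) + 2 * Q" by simp
    also have "\<dots> = gpi * A1 + (- ii * gpi^2) * Q" using A1 two_eq_pi by simp
    also have "\<dots> = gpi * B1" by (simp add: B1_def algebra_simps power2_eq_square)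
    finally show ?thesis .
  qed
  have b1: "\<not> gpi dvd B1"
  proof
    assume "gpi dvd B1"
    moreover have "gpi dvd ii * gpi * Q" by simp
    ultimately have "gpi dvd B1 + ii * gpi * Q" by (rule dvd_add)
    thus False using a1 by (simp add: B1_def)
  qed
  have "gpi^4 dvd Y^4" using y by (rule dvd_power_same)
  hence d1: "gpi^4 dvd e * Y^4" by (rule dvd_mult)
  have "e * Y^4 = (gpi * A1) * (gpi * B1)" using eq A1 pb by metis
  also have "\<dots> = gpi^2 * (A1 * B1)" by (simp add: power2_eq_square mult_ac)
  finally have d2: "gpi^2 * gpi^2 dvd gpi^2 * (A1 * B1)"
    using d1 by (simp add: power4_eq_xxxx power2_eq_square mult.assoc)
  have "gpi^2 dvd A1 * B1" using d2 by (subst (asm) dvd_mult_cancel_left) simp_all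
  hence "gpi dvd A1 * B1" by (rule dvd_trans[rotated]) (simp add: power2_eq_square)
  thus False using a1 b1 prime_elem_pi by (simp add: prime_elem_dvd_mult_iff)
qed


lemma cancel_gpi2: "gpi^2 * a = gpi^2 * b \<Longrightarrow> a = (b::gi)"
  by (metis mult_left_cancel power_not_zero gpi_nz)
lemma cancel_gpi4: "gpi^4 * a = gpi^4 * b \<Longrightarrow> a = (b::gi)"
  by (metis mult_left_cancel power_not_zero gpi_nz)

lemma dvdpow: "p dvd x \<Longrightarrow> 0 < n \<Longrightarrow> p dvd (x::'a::comm_semiring_1) ^ n"
  by (metis dvd_power dvd_trans)

lemma unit_eps: "\<epsilon> = 1 \<or> \<epsilon> = -1 \<Longrightarrow> \<epsilon> * \<epsilon> = (1::gi)" by auto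

lemma final_ineq:
  fixes S T G H :: int
  assumes "4*S^2 + 4*T^2 \<le> 4*G + 2*H" "G \<ge> 1" "H \<ge> 1" "S \<ge> 0" "T \<ge> 0"
  shows "S + T < G + H"
proof -
  have "(S+T)^2 \<le> 2*(S^2+T^2)" using zero_le_power2[of "S-T"] by (simp add: power2_eq_square algebra_simps)
  also have "\<dots> \<le> 2*G + H" using assms(1) by (smt (verit))
  also have "\<dots> < (G+H)^2"
  proof -
    have "G \<le> G*G" "H \<le> H*H" "G \<le> G*H" using assms(2,3) by (simp_all add: mult_le_cancel_left1)
    moreover have "(G+H)^2 = G*G + H*H + 2*(G*H)" by (simp add: power2_eq_square algebra_simps)
    ultimately show ?thesis using assms(2,3) by (smt (verit))
  qed
  finally have "(S+T)^2 < (G+H)^2" .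
  thus ?thesis using assms by (smt (verit) power_mono)
qed

lemma desc_d:
  fixes X Y W \<epsilon> :: gi
  assumes eq: "X^4 + \<epsilon>*Y^4 = W^2" and eps: "\<epsilon> = 1 \<or> \<epsilon> = -1"
    and X0: "X \<noteq> 0" and Y0: "Y \<noteq> 0" and W0: "W \<noteq> 0" and cop: "coprime X Y"
    and xo: "\<not> gpi dvd X" and ye: "gpi dvd Y"
  shows "\<exists>s t W'. s^4 + \<epsilon>*t^4 = W'^2 \<and> s \<noteq> 0 \<and> t \<noteq> 0 \<and> W' \<noteq> 0 \<and>
            gn s ^ 2 + gn t ^ 2 < gn X ^ 2 + gn Y ^ 2"
proof -
  have ee: "\<epsilon> * \<epsilon> = 1" using eps by auto
  have eu: "is_unit \<epsilon>" using ee by (metis dvd_triv_left)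
  have x4: "X^4 = W^2 - \<epsilon>*Y^4" using eq by (simp add: algebra_simps)
  have wo: "\<not> gpi dvd W"
  proof
    assume "gpi dvd W"
    hence "gpi dvd W^2" by (metis dvd_mult2 power2_eq_square)
    moreover have "gpi dvd \<epsilon>*Y^4"
    proof -
      have "Y dvd Y^4" by (simp add: dvd_power)
      hence "gpi dvd Y^4" using ye by (rule dvd_trans[rotated])
      thus ?thesis by (rule dvd_mult)
    qed
    ultimately have "gpi dvd X^4" unfolding x4 by (rule dvd_diff)
    hence "gpi dvd X" using prime_elem_pi by (simp add: prime_elem_dvd_power_iff)
    thus False using xo by simp
  qed
  have x2o: "\<not> gpi dvd X^2" using xo prime_elem_pi by (simp add: prime_elem_dvd_power_iff)
  define A where "A = W - X^2"
  define B where "B = W + X^2"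
  have AB: "A * B = \<epsilon> * Y^4" using eq
    by (simp add: A_def B_def algebra_simps power2_eq_square power4_eq_xxxx)
  have "gpi^2 dvd A" unfolding A_def
    by (rule pi2_dvd_diff[OF wo x2o _ ye, of \<epsilon>]) (use AB in \<open>simp add: A_def B_def\<close>)
  then obtain \<alpha> where al: "A = gpi^2 * \<alpha>" by (rule dvdE)
  define mX where "mX = uminus (X^2)"
  have "gpi^2 dvd W - mX"
    by (rule pi2_dvd_diff[OF wo _ _ ye, where e = \<epsilon>]) (use AB x2o in \<open>simp_all add: A_def B_def mX_def mult.commute\<close>)
  hence "gpi^2 dvd B" by (simp add: B_def mX_def)
  then obtain \<beta> where be: "B = gpi^2 * \<beta>" by (rule dvdE)
  obtain Y1 where y1: "Y = gpi * Y1" using ye by (rule dvdE)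
  have "gpi^4 * (\<alpha> * \<beta>) = gpi^4 * (\<epsilon> * Y1^4)"
    using AB al be y1 by (simp add: power_mult_distrib power4_eq_xxxx power2_eq_square mult_ac)
  hence ab: "\<alpha> * \<beta> = \<epsilon> * Y1^4" by (rule cancel_gpi4)
  have "gpi^2 * (\<alpha> + \<beta>) = gpi^2 * (- ii * W)"
  proof -
    have "gpi^2 * (\<alpha> + \<beta>) = A + B" using al be by (simp add: algebra_simps)
    also have "\<dots> = 2 * W" by (simp add: A_def B_def)
    also have "\<dots> = gpi^2 * (- ii * W)" by (simp add: two_eq_pi mult_ac)
    finally show ?thesis .
  qed
  hence sab: "\<alpha> + \<beta> = - ii * W" by (rule cancel_gpi2)
  have "gpi^2 * (\<beta> - \<alpha>) = gpi^2 * (- ii * X^2)"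
  proof -
    have "gpi^2 * (\<beta> - \<alpha>) = B - A" using al be by (simp add: algebra_simps)
    also have "\<dots> = 2 * X^2" by (simp add: A_def B_def)
    also have "\<dots> = gpi^2 * (- ii * X^2)" by (simp add: two_eq_pi mult_ac)
    finally show ?thesis .
  qed
  hence dab: "\<beta> - \<alpha> = - ii * X^2" by (rule cancel_gpi2)
  have A0: "A \<noteq> 0" and B0: "B \<noteq> 0" using AB Y0 eu by (auto simp: A_def B_def)
  have a0: "\<alpha> \<noteq> 0" using A0 al by auto
  have cab: "coprime \<alpha> \<beta>"
  proof (rule ccontr)
    assume "\<not> coprime \<alpha> \<beta>"
    then obtain p where p: "prime p" "p dvd \<alpha>" "p dvd \<beta>" using a0 by (rule not_coprime_prime)
    have pe: "prime_elem p" using p(1) by simp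
    have "p dvd \<alpha> + \<beta>" using p by simp
    hence "p dvd ii * (\<alpha> + \<beta>)" by simp
    hence pW: "p dvd W" using sab by (simp add: ii_ii_mult)
    have "p dvd \<epsilon> * (\<alpha> * \<beta>)" using p by simp
    hence "p dvd Y1^4" using ab ee by (simp add: mult.assoc[symmetric])
    hence "p dvd Y1" using pe by (simp add: prime_elem_dvd_power_iff)
    hence pY: "p dvd Y" using y1 by simp
    have "p dvd W^2 - \<epsilon>*Y^4" using dvdpow[OF pW, of 2] dvdpow[OF pY, of 4] by (simp add: dvd_diff)
    hence "p dvd X" using x4 pe by (metis prime_elem_dvd_power_iff zero_less_numeral)
    hence "is_unit p" using pY cop coprime_common_divisor by blast
    thus False using pe by (simp add: prime_elem_def)
  qed
  hence cab': "coprime \<alpha> (\<epsilon> * \<beta>)" using eu by (simp add: is_unit_right_imp_coprime)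
  have ab': "\<alpha> * (\<epsilon> * \<beta>) = Y1 ^ 4" using ab ee by (metis mult.assoc mult.commute mult_1)
  obtain u v s t where h: "u * v = 1" "\<alpha> = u * s^4" "\<epsilon> * \<beta> = v * t^4" "Y1 = s * t"
    using coprime_power_split[OF cab' ab'] by auto
  have vu: "is_unit v" using h(1) by (metis dvd_triv_right)
  have uu: "is_unit u" using h(1) by (metis dvd_triv_left)
  have bb: "\<beta> = \<epsilon> * v * t^4" using h(3) ee by (metis mult.assoc mult_1)
  have y10: "Y1 \<noteq> 0" using Y0 y1 by auto
  have s0: "s \<noteq> 0" and t0: "t \<noteq> 0" using y10 h(4) by auto
  have key: "s^4 - \<epsilon> * v^2 * t^4 = ii * v * X^2"
  proof -
    have "\<epsilon> * v * t^4 - u * s^4 = - ii * X^2" using dab bb h(2) by simp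
    hence "v * (\<epsilon> * v * t^4 - u * s^4) = v * (- ii * X^2)" by simp
    hence "\<epsilon> * v^2 * t^4 - (u*v) * s^4 = - ii * v * X^2" by (simp add: algebra_simps power2_eq_square)
    thus ?thesis using h(1) by (simp add: algebra_simps)
  qed
  obtain W' where W': "s^4 + \<epsilon> * t^4 = W'^2" "W' \<noteq> 0"
  proof -
    note ob = that
    have "v = 1 \<or> v = -1 \<or> v = ii \<or> v = -ii" using vu by (rule unit_cases)
    moreover have False if "v = 1 \<or> v = -1"
    proof -
      have "s^4 + (-\<epsilon>) * t^4 = (ii * v) * X^2" using key that by (auto simp: algebra_simps)
      moreover have "-\<epsilon> = 1 \<or> -\<epsilon> = -1" using eps by auto
      moreover have "ii * v = ii \<or> ii * v = -ii" using that by auto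
      ultimately show False using P1 xo by blast
    qed
    moreover have ?thesis if "v = ii"
    proof -
      have "s^4 + \<epsilon> * t^4 = (ii * X)^2" using key that
        by (simp add: power2_eq_square ii_sq algebra_simps ii_ii_mult)
      thus ?thesis using X0 by (intro ob[of "ii * X"]) simp_all
    qed
    moreover have ?thesis if "v = -ii"
    proof -
      have "s^4 + \<epsilon> * t^4 = X^2" using key that
        by (simp add: power2_eq_square ii_sq algebra_simps ii_ii_mult)
      thus ?thesis using X0 by (intro ob[of X]) simp_all
    qed
    ultimately show ?thesis by blast
  qed
  have gA: "gn A = 4 * (gn s ^ 2)^2" using al h(2) gn_unit[OF uu]
    by (simp add: gn_mult gn_power power2_eq_square power4_eq_xxxx)
  have gB: "gn B = 4 * (gn t ^ 2)^2"
  proof -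
    have "gn \<beta> = gn (\<epsilon> * \<beta>)" using gn_unit[OF eu] by (simp add: gn_mult)
    also have "\<dots> = gn t ^ 4" using h(3) gn_unit[OF vu] by (simp add: gn_mult gn_power)
    finally show ?thesis using be by (simp add: gn_mult gn_power power2_eq_square power4_eq_xxxx)
  qed
  have par: "gn A + gn B = 2 * gn W + 2 * gn X ^ 2"
    using parallelogram[of W "X^2"] by (simp add: A_def B_def gn_power add.commute)
  have "gn (W^2) \<le> (gn X ^ 2 + gn Y ^ 2)^2"
    unfolding eq[symmetric]
    by (rule gn_triangle) (use gn_unit[OF eu] in \<open>simp_all add: gn_mult gn_power power2_eq_square power4_eq_xxxx\<close>)
  hence "gn W ^ 2 \<le> (gn X ^ 2 + gn Y ^ 2)^2" by (simp add: gn_power)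
  hence gW: "gn W \<le> gn X ^ 2 + gn Y ^ 2"
    by (rule power2_le_imp_le) simp
  have G1: "gn X ^ 2 \<ge> 1" using gn_pos[OF X0] by (simp add: one_le_power)
  have H1: "gn Y ^ 2 \<ge> 1" using gn_pos[OF Y0] by (simp add: one_le_power)
  have "4 * (gn s ^ 2)^2 + 4 * (gn t ^ 2)^2 \<le> 4 * gn X ^ 2 + 2 * gn Y ^ 2"
    using gA gB par gW by linarith
  hence "gn s ^ 2 + gn t ^ 2 < gn X ^ 2 + gn Y ^ 2"
    by (rule final_ineq[OF _ G1 H1]) simp_all
  thus ?thesis using W' s0 t0 by blast
qed



lemma H_main:
  fixes X Y W \<epsilon> :: gi
  assumes "X^4 + \<epsilon>*Y^4 = W^2" "\<epsilon> = 1 \<or> \<epsilon> = -1" "X \<noteq> 0" "Y \<noteq> 0" "W \<noteq> 0"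
  shows False
  using assms
proof (induction "nat (gn X ^ 2 + gn Y ^ 2)" arbitrary: X Y W \<epsilon> rule: less_induct)
  case less
  note eq = less.prems(1) and eps = less.prems(2) and X0 = less.prems(3)
    and Y0 = less.prems(4) and W0 = less.prems(5)
  have IH: "False" if "s^4 + e*t^4 = W'^2" "e = 1 \<or> e = -1" "s \<noteq> 0" "t \<noteq> 0" "W' \<noteq> 0"
     "gn s ^ 2 + gn t ^ 2 < gn X ^ 2 + gn Y ^ 2" for s t W' e
  proof -
    have "nat (gn s ^ 2 + gn t ^ 2) < nat (gn X ^ 2 + gn Y ^ 2)"
      using that(6) zero_le_power2[of "gn s"] zero_le_power2[of "gn t"] by linarith
    thus False using less.hyps that(1-5) by blast
  qed
  show False
  proof (cases "coprime X Y")
    case False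
    then obtain p where p: "prime p" "p dvd X" "p dvd Y" using X0 by (rule not_coprime_prime)
    have pe: "prime_elem p" using p(1) by simp
    have p0: "p \<noteq> 0" and pnu: "\<not> is_unit p" using pe by (auto simp: prime_elem_def)
    obtain X' where X': "X = p * X'" using p(2) by (rule dvdE)
    obtain Y' where Y': "Y = p * Y'" using p(3) by (rule dvdE)
    have "(p^2)^2 dvd W^2"
    proof -
      have "W^2 = p^4 * (X'^4 + \<epsilon> * Y'^4)" using eq X' Y' by (simp add: power_mult_distrib algebra_simps)
      moreover have "(p^2)^2 = p^4" by (simp flip: power_mult)
      ultimately show ?thesis by simp
    qed
    hence "p^2 dvd W" by (metis pow_divides_pow_iff zero_less_numeral)
    then obtain W' where W': "W = p^2 * W'" by (rule dvdE)
    have "p^4 * (X'^4 + \<epsilon> * Y'^4) = p^4 * W'^2"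
      using eq X' Y' W' by (simp add: power_mult_distrib algebra_simps flip: power_mult)
    hence e': "X'^4 + \<epsilon> * Y'^4 = W'^2" using p0 by simp
    have X'0: "X' \<noteq> 0" "Y' \<noteq> 0" "W' \<noteq> 0" using X0 Y0 W0 X' Y' W' by auto
    have g2: "gn p \<ge> 2" by (rule gn_ge2[OF p0 pnu])
    have "gn X' ^ 2 < gn X ^ 2"
    proof -
      have "gn X = gn p * gn X'" using X' by (simp add: gn_mult)
      moreover have "gn X' > 0" using X'0(1) by (rule gn_pos)
      ultimately have "gn X' < gn X" using g2 by (simp add: mult_less_cancel_right1)
      thus ?thesis using gn_nonneg[of X'] by (simp add: power_strict_mono)
    qed
    moreover have "gn Y' ^ 2 \<le> gn Y ^ 2"
    proof -
      have "gn Y = gn p * gn Y'" using Y' by (simp add: gn_mult)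
      hence "gn Y' \<le> gn Y" using g2 gn_nonneg[of Y'] by (simp add: mult_le_cancel_right1 not_less)
      thus ?thesis using gn_nonneg[of Y'] by (simp add: power_mono)
    qed
    ultimately show False using IH[OF e' eps X'0] by linarith
  next
    case cop: True
    show False
    proof (cases "gpi dvd X"; cases "gpi dvd Y")
      assume "gpi dvd X" "gpi dvd Y"
      hence "is_unit gpi" using cop coprime_common_divisor by blast
      thus False using pi_not_unit by simp
    next
      assume xo: "\<not> gpi dvd X" and yo: "\<not> gpi dvd Y"
      show False
      proof (cases "\<epsilon> = 1")
        case True
        thus False using P2[OF xo yo, of W] eq by simp
      next
        case False
        hence em: "\<epsilon> = -1" using eps by simp
        hence eq': "X^4 - Y^4 = W^2" using eq by simp
        have "4 dvd (X^2 - Y^2) \<or> 4 dvd (X^2 + Y^2)" by (rule C4[OF xo yo])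
        thus False
        proof
          assume "4 dvd X^2 - Y^2"
          from desc_c[OF eq' W0 X0 Y0 cop this] obtain m n W' where
            h: "m^4 - n^4 = W'^2" "m \<noteq> 0" "n \<noteq> 0" "W' \<noteq> 0" "gn m ^ 2 + gn n ^ 2 < gn X ^ 2 + gn Y ^ 2"
            by blast
          show False using IH[of m "-1" n W'] h by simp
        next
          assume d: "4 dvd X^2 + Y^2"
          define Y2 where "Y2 = ii * Y"
          have y24: "Y2^4 = Y^4" by (simp add: Y2_def power_mult_distrib unit_pow4)
          have y22: "Y2^2 = - (Y^2)" by (simp add: Y2_def power_mult_distrib ii_sq[unfolded power2_eq_square[symmetric]] power2_eq_square[symmetric])
          have eq2: "X^4 - Y2^4 = W^2" using eq' y24 by simp
          have cop2: "coprime X Y2" using cop by (simp add: Y2_def is_unit_right_imp_coprime)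
          have Y20: "Y2 \<noteq> 0" using Y0 by (simp add: Y2_def)
          have d2: "4 dvd X^2 - Y2^2" using d y22 by simp
          from desc_c[OF eq2 W0 X0 Y20 cop2 d2] obtain m n W' where
            h: "m^4 - n^4 = W'^2" "m \<noteq> 0" "n \<noteq> 0" "W' \<noteq> 0" "gn m ^ 2 + gn n ^ 2 < gn X ^ 2 + gn Y2 ^ 2"
            by blast
          have "gn Y2 = gn Y" by (simp add: Y2_def)
          thus False using IH[of m "-1" n W'] h by simp
        qed
      qed
    next
      assume xo: "\<not> gpi dvd X" and ye: "gpi dvd Y"
      from desc_d[OF eq eps X0 Y0 W0 cop xo ye] obtain s t W' where
        h: "s^4 + \<epsilon>*t^4 = W'^2" "s \<noteq> 0" "t \<noteq> 0" "W' \<noteq> 0" "gn s ^ 2 + gn t ^ 2 < gn X ^ 2 + gn Y ^ 2"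
        by blast
      show False using IH[OF h(1) eps h(2-5)] .
    next
      assume xe: "gpi dvd X" and yo: "\<not> gpi dvd Y"
      define W2 where "W2 = (if \<epsilon> = 1 then W else ii * W)"
      have eq2: "Y^4 + \<epsilon>*X^4 = W2^2"
      proof (cases "\<epsilon> = 1")
        case True thus ?thesis using eq by (simp add: W2_def add.commute)
      next
        case False
        hence "\<epsilon> = -1" using eps by simp
        thus ?thesis using eq by (simp add: W2_def power_mult_distrib power2_eq_square ii_ii_mult algebra_simps)
      qed
      have W20: "W2 \<noteq> 0" using W0 by (simp add: W2_def)
      have cop2: "coprime Y X" using cop by (simp add: coprime_commute)
      from desc_d[OF eq2 eps Y0 X0 W20 cop2 yo xe] obtain s t W' where
        h: "s^4 + \<epsilon>*t^4 = W'^2" "s \<noteq> 0" "t \<noteq> 0" "W' \<noteq> 0" "gn s ^ 2 + gn t ^ 2 < gn Y ^ 2 + gn X ^ 2"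
        by blast
      show False using IH[OF h(1) eps h(2-4)] h(5) by linarith
    qed
  qed
qed


lemma parity_lemma:
  fixes x y z :: gi
  assumes "x^4 + e * y^4 = ii * z^2" "e = 1 \<or> e = -1" "coprime x y"
  shows "\<not> gpi dvd x \<and> \<not> gpi dvd y \<and> gpi dvd z"
proof -
  have g: "gim (x^4 + e * y^4) = gim (ii * z^2)" using assms(1) by simp
  have "even (gim (x^4 + e * y^4))"
    using assms(2)
  proof
    assume "e = 1" thus ?thesis using even_gim_4[of x] even_gim_4[of y] by (simp del: gi_power2_simps)
  next
    assume "e = -1" thus ?thesis using even_gim_4[of x] even_gim_4[of y] by (simp del: gi_power2_simps)
  qed
  hence "even (gim (ii * z^2))" by (simp only: g)
  hence "even (gre (z^2))" by (simp only: gim_ii_mult)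
  hence zd: "gpi dvd z" using even_gre_sq_iff[of z] pi_dvd_iff[of z] by blast
  have r: "gre (x^4 + e * y^4) = gre (ii * z^2)" using assms(1) by simp
  have "even (gre (ii * z^2))" by simp
  hence "even (gre (x^4 + e * y^4))" by (simp only: r)
  hence "even (gre (x^4) + gre (y^4))" using assms(2)
  proof -
    assume h: "even (gre (x^4 + e * y^4))"
    show ?thesis using assms(2)
    proof
      assume "e = 1" thus ?thesis using h by (simp del: gi_power2_simps)
    next
      assume "e = -1" thus ?thesis using h by (simp del: gi_power2_simps)
    qed
  qed
  hence "even (gre x + gim x) \<longleftrightarrow> even (gre y + gim y)"
    using even_gre_4_iff[of x] even_gre_4_iff[of y] by (auto simp del: gi_power2_simps)
  hence "gpi dvd x \<longleftrightarrow> gpi dvd y" by (simp add: pi_dvd_iff)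
  moreover have "\<not> (gpi dvd x \<and> gpi dvd y)"
    using assms(3) coprime_common_divisor pi_not_unit by blast
  ultimately show ?thesis using zd by blast
qed

lemma thm_i_core:
  fixes x y z :: gi
  assumes eq: "x^4 - y^4 = ii * z^2" and cop: "coprime x y" and z0: "z \<noteq> 0"
    and x0: "x \<noteq> 0" and y0: "y \<noteq> 0" and d4: "4 dvd x^2 - y^2"
  shows False
proof -
  obtain b where b: "x^2 - y^2 = 4 * b" using d4 by (rule dvdE)
  define a where "a = x^2 - 2*b"
  have xa: "x^2 = a + 2*b" and ya: "y^2 = a - 2*b" and s: "x^2 + y^2 = 2*a"
    using b by (simp_all add: a_def algebra_simps)
  have "ii * z^2 = (x^2 + y^2) * (x^2 - y^2)" using eq
    by (simp add: algebra_simps power2_eq_square power4_eq_xxxx)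
  also have "\<dots> = 8 * (a * b)" using s b by simp
  finally have "ii * z^2 = ii * (gpi ^ 6 * (a * b))" by (simp add: eight_eq algebra_simps)
  hence w8: "z^2 = gpi ^ 6 * (a * b)" by simp
  hence "gpi ^ 3 dvd z" by (intro pi3_dvd) simp
  then obtain d where d: "z = gpi ^ 3 * d" by (rule dvdE)
  have "gpi ^ 6 * d^2 = gpi ^ 6 * (a * b)"
    using w8 d by (simp add: power_mult_distrib flip: power_mult)
  hence dd: "a * b = d ^ 2" by (metis mult_left_cancel power_not_zero gpi_nz)
  have cab: "coprime a b" using coprime_ab[OF cop xa ya] .
  obtain u v m n where h: "u * v = 1" "a = u * m^2" "b = v * n^2" "d = m * n"
    using coprime_power_split[OF cab dd] by auto
  have d0: "d \<noteq> 0" using z0 d by simp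
  hence m0: "m \<noteq> 0" and n0: "n \<noteq> 0" using h(4) by auto
  have vu: "v^2 = u^2" using unit_inv_sq[OF h(1)] .
  have key: "(x*y)^2 = u^2 * (m^4 + (gpi*n)^4)"
  proof -
    have b2: "b^2 = v^2 * n^4" unfolding h(3)
      by (simp add: power_mult_distrib power2_eq_square power4_eq_xxxx)
    have a2: "a^2 = u^2 * m^4" unfolding h(2)
      by (simp add: power_mult_distrib power2_eq_square power4_eq_xxxx)
    have p4: "(gpi*n)^4 = - 4 * n^4" by (simp add: power_mult_distrib pi4)
    have "(x*y)^2 = (a + 2*b) * (a - 2*b)" using xa ya by (simp add: power_mult_distrib)
    also have "\<dots> = a^2 - 4 * b^2" by (simp add: algebra_simps power2_eq_square)
    also have "\<dots> = u^2 * m^4 - 4 * (v^2 * n^4)" using a2 b2 by simp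
    also have "\<dots> = u^2 * (m^4 + (gpi*n)^4)" using vu p4 by (simp add: algebra_simps)
    finally show ?thesis .
  qed
  have u: "is_unit u" using h(1) by (metis dvd_triv_left)
  have pn0: "gpi * n \<noteq> 0" using n0 by simp
  show False
  proof (cases "u^2 = 1")
    case True
    hence "m^4 + 1 * (gpi*n)^4 = (x*y)^2" using key by simp
    thus False using H_main m0 pn0 x0 y0 by fastforce
  next
    case False
    hence "u^2 = -1" using unit_sq[OF u] by simp
    hence k2: "(x*y)^2 = - (m^4 + (gpi*n)^4)" using key by simp
    have "(ii*x*y)^2 = - ((x*y)^2)"
      by (simp add: power_mult_distrib ii_sq[unfolded power2_eq_square[symmetric]])
    hence "m^4 + 1 * (gpi*n)^4 = (ii*x*y)^2" using k2 by simp
    thus False using H_main m0 pn0 x0 y0 by fastforce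
  qed
qed

lemma thm_i_cop:
  fixes x y z :: gi
  assumes eq: "x^4 - y^4 = ii * z^2" and cop: "coprime x y" and z0: "z \<noteq> 0"
    and x0: "x \<noteq> 0" and y0: "y \<noteq> 0"
  shows False
proof -
  have "x^4 + (-1) * y^4 = ii * z^2" using eq by simp
  from parity_lemma[OF this _ cop] have xo: "\<not> gpi dvd x" and yo: "\<not> gpi dvd y" by simp_all
  have "4 dvd (x^2 - y^2) \<or> 4 dvd (x^2 + y^2)" by (rule C4[OF xo yo])
  thus False
  proof
    assume "4 dvd x^2 - y^2"
    thus False using thm_i_core[OF eq cop z0 x0 y0] by simp
  next
    assume d: "4 dvd x^2 + y^2"
    define y2 where "y2 = ii * y"
    have y24: "y2^4 = y^4" by (simp add: y2_def power_mult_distrib unit_pow4)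
    have y22: "y2^2 = - (y^2)" by (simp add: y2_def power_mult_distrib ii_sq[unfolded power2_eq_square[symmetric]] power2_eq_square[symmetric])
    have eq2: "x^4 - y2^4 = ii * z^2" using eq y24 by simp
    have cop2: "coprime x y2" using cop by (simp add: y2_def is_unit_right_imp_coprime)
    have y20: "y2 \<noteq> 0" using y0 by (simp add: y2_def)
    show False using thm_i_core[OF eq2 cop2 z0 x0 y20] d y22 by simp
  qed
qed

lemma thm_i_gi:
  fixes x y z :: gi
  assumes eq: "x^4 - y^4 = ii * z^2"
  shows "x * y * z = 0"
proof (rule ccontr)
  assume "x * y * z \<noteq> 0"
  hence x0: "x \<noteq> 0" and y0: "y \<noteq> 0" and z0: "z \<noteq> 0" by auto
  define g where "g = gcd x y"
  have g0: "g \<noteq> 0" using x0 by (simp add: g_def)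
  obtain x' where x': "x = g * x'" unfolding g_def by (rule dvdE[OF gcd_dvd1])
  obtain y' where y': "y = g * y'" unfolding g_def by (rule dvdE[OF gcd_dvd2])
  have cop: "coprime x' y'"
  proof -
    have "coprime (x div g) (y div g)" unfolding g_def using x0 by (intro div_gcd_coprime) simp
    thus ?thesis using x' y' g0 by simp
  qed
  have "z^2 = - ii * (ii * z^2)" by (simp add: mult.assoc[symmetric] ii_sq)
  also have "\<dots> = - ii * (g^4 * (x'^4 - y'^4))" using eq x' y' by (simp add: power_mult_distrib algebra_simps)
  finally have "(g^2)^2 dvd z^2" by (simp flip: power_mult)
  hence "g^2 dvd z" by (metis pow_divides_pow_iff zero_less_numeral)
  then obtain z' where z': "z = g^2 * z'" by (rule dvdE)
  have "g^4 * (x'^4 - y'^4) = g^4 * (ii * z'^2)"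
    using eq x' y' z' by (simp add: power_mult_distrib algebra_simps flip: power_mult)
  hence eq': "x'^4 - y'^4 = ii * z'^2" using g0 by simp
  show False using thm_i_cop[OF eq' cop] x0 y0 z0 x' y' z' by auto
qed


lemma z_sq_cases:
  assumes "(z::gi)^2 = - 2 * ii"
  shows "z = Gi (-1) 1 \<or> z = Gi 1 (-1)"
proof -
  have b: "gre z * gim z = -1"
    using arg_cong[OF assms, of gim] by (simp add: mult.commute)
  have "gre z = 1 \<or> gre z = -1" using b by (metis zmult_eq_neg1_iff)
  moreover have "gim z = - gre z" using b \<open>gre z = 1 \<or> gre z = -1\<close> by auto
  ultimately show ?thesis by (auto simp: gi_eq_iff)
qed

lemma thm_ii_fwd:
  fixes x y z :: gi
  assumes eq: "x^4 + y^4 = ii * z^2" and nz: "x * y * z \<noteq> 0"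
    and cp: "\<And>d. d dvd x \<Longrightarrow> d dvd y \<Longrightarrow> d dvd z \<Longrightarrow> is_unit d"
  shows "is_unit x \<and> is_unit y \<and> (z = Gi (-1) 1 \<or> z = Gi 1 (-1))"
proof -
  have x0: "x \<noteq> 0" and y0: "y \<noteq> 0" and z0: "z \<noteq> 0" using nz by auto
  have cop: "coprime x y"
  proof (rule coprimeI)
    fix e assume ex: "e dvd x" and ey: "e dvd y"
    have ee: "(e^2)^2 = e^4" using power_mult[of e 2 2] by simp
    have "(e^2)^2 dvd x^4 + y^4"
      unfolding ee using dvd_power_same[OF ex, of 4] dvd_power_same[OF ey, of 4] by (rule dvd_add)
    hence "(e^2)^2 dvd ii * z^2" using eq by simp
    hence "(e^2)^2 dvd z^2" using ii_unit by (metis dvd_mult_unit_iff' )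
    hence "e^2 dvd z" by (metis pow_divides_pow_iff zero_less_numeral)
    hence "e dvd z" by (metis dvd_power dvd_trans zero_less_numeral)
    thus "is_unit e" using cp ex ey by blast
  qed
  have "x^4 + 1 * y^4 = ii * z^2" using eq by simp
  from parity_lemma[OF this _ cop] have xo: "\<not> gpi dvd x" and yo: "\<not> gpi dvd y"
    and zd: "gpi dvd z" by simp_all
  obtain w where w: "z = gpi * w" using zd by (rule dvdE)
  have "2 dvd x^4 - y^4"
  proof -
    have "odd (gre (x^4))" "odd (gre (y^4))" using xo yo even_gre_4_iff[of x] even_gre_4_iff[of y]
      by (simp_all add: pi_dvd_iff del: gi_power2_simps)
    moreover have "even (gim (x^4))" "even (gim (y^4))" by (rule even_gim_4)+
    ultimately show ?thesis by (simp add: numeral_dvd_gi_iff del: gi_power2_simps)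
  qed
  then obtain V0 where V0: "x^4 - y^4 = 2 * V0" by (rule dvdE)
  define V where "V = - ii * V0"
  have V: "x^4 - y^4 = gpi^2 * V" using V0 by (simp add: V_def two_eq_pi mult_ac)
  have "gpi^4 * ((x*y)^4 - w^4) = gpi^4 * V^2"
  proof -
    have gg: "(gpi^2)^2 = gpi^4" using power_mult[of gpi 2 2] by simp
    have "gpi^4 * V^2 = (x^4 - y^4)^2" using V by (simp add: power_mult_distrib gg)
    also have "\<dots> = (x^4 + y^4)^2 - 4 * (x*y)^4"
      by (simp add: power_mult_distrib power2_eq_square algebra_simps)
    also have "\<dots> = (ii * z^2)^2 - 4 * (x*y)^4" using eq by simp
    also have "\<dots> = gpi^4 * ((x*y)^4 - w^4)"
    proof -
      have z4: "z^4 = -4 * w^4" using w pi4 by (simp add: power_mult_distrib)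
      have "(ii * z^2)^2 = ii^2 * (z^2)^2" by (rule power_mult_distrib)
      hence "(ii * z^2)^2 = - (z^4)"
        by (simp add: ii_sq[unfolded power2_eq_square[symmetric]] gi_power4[symmetric])
      thus ?thesis using z4 pi4 by (simp add: algebra_simps)
    qed
    finally show ?thesis by simp
  qed
  hence "(x*y)^4 - w^4 = V^2" by (rule cancel_gpi4)
  hence eqH: "(x*y)^4 + (-1) * w^4 = V^2" by simp
  have w0: "w \<noteq> 0" using z0 w by auto
  have "V = 0"
  proof (rule ccontr)
    assume "V \<noteq> 0"
    thus False using H_main[OF eqH _ _ w0] x0 y0 by simp
  qed
  hence x4: "x^4 = y^4" using V by simp
  have ux: "is_unit x"
  proof -
    have "x dvd x^4" by (simp add: dvd_power)
    hence "x dvd y^4" using x4 by simp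
    moreover have "coprime x (y^4)" using cop by simp
    ultimately show ?thesis using coprime_common_divisor[of x "y^4" x] by simp
  qed
  have uy: "is_unit y"
  proof -
    have "y dvd y^4" by (simp add: dvd_power)
    hence "y dvd x^4" using x4 by simp
    moreover have "coprime y (x^4)" using cop by (simp add: coprime_commute)
    ultimately show ?thesis using coprime_common_divisor[of y "x^4" y] by simp
  qed
  have "ii * z^2 = 2" using eq unit_pow4[OF ux] unit_pow4[OF uy] by simp
  hence "- ii * (ii * z^2) = - ii * 2" by simp
  hence "z^2 = - 2 * ii" by (simp add: ii_ii_mult)
  thus ?thesis using ux uy z_sq_cases by blast
qed



definition emb :: "gi \<Rightarrow> complex" where
  "emb z = of_int (gre z) + of_int (gim z) * \<i>"

lemma emb_Re [simp]: "Re (emb z) = of_int (gre z)" and emb_Im [simp]: "Im (emb z) = of_int (gim z)"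
  by (simp_all add: emb_def)

lemma emb_inj: "emb a = emb b \<longleftrightarrow> a = b"
  by (auto simp: complex_eq_iff gi_eq_iff)

lemma emb_add [simp]: "emb (a + b) = emb a + emb b"
  and emb_diff [simp]: "emb (a - b) = emb a - emb b"
  and emb_minus [simp]: "emb (- a) = - emb a"
  and emb_mult [simp]: "emb (a * b) = emb a * emb b"
  and emb_0 [simp]: "emb 0 = 0" and emb_1 [simp]: "emb 1 = 1"
  and emb_ii [simp]: "emb ii = \<i>"
  by (simp_all add: complex_eq_iff)

lemma emb_power [simp]: "emb (a ^ n) = emb a ^ n"
  by (induction n) simp_all

lemma emb_eq_0 [simp]: "emb a = 0 \<longleftrightarrow> a = 0"
  using emb_inj[of a 0] by simp

lemma gauss_ints_emb: "x \<in> gauss_ints \<longleftrightarrow> (\<exists>X. x = emb X)"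
proof
  assume "x \<in> gauss_ints"
  then obtain a b where "x = of_int a + of_int b * \<i>" by (auto simp: gauss_ints_def)
  hence "x = emb (Gi a b)" by (simp add: emb_def)
  thus "\<exists>X. x = emb X" ..
next
  assume "\<exists>X. x = emb X"
  thus "x \<in> gauss_ints" by (auto simp: gauss_ints_def emb_def)
qed

lemma emb_in [simp]: "emb X \<in> gauss_ints"
  using gauss_ints_emb by blast

lemma gdvd_emb: "gdvd (emb D) (emb X) \<longleftrightarrow> D dvd X"
proof
  assume "gdvd (emb D) (emb X)"
  then obtain k where k: "k \<in> gauss_ints" "emb X = emb D * k" by (auto simp: gdvd_def)
  from k(1) obtain K where "k = emb K" by (auto simp: gauss_ints_emb)
  hence "emb X = emb D * emb K" using k(2) by simp
  hence "X = D * K" by (simp flip: emb_mult add: emb_inj)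
  thus "D dvd X" by simp
next
  assume "D dvd X"
  then obtain K where "X = D * K" by (rule dvdE)
  thus "gdvd (emb D) (emb X)" unfolding gdvd_def by (intro bexI[of _ "emb K"]) simp_all
qed

lemma gunit_emb: "gunit (emb D) \<longleftrightarrow> is_unit D"
  using gdvd_emb[of D 1] by (simp add: gunit_def)

lemma gcoprime3_emb:
  "gcoprime3 (emb X) (emb Y) (emb Z) \<longleftrightarrow> (\<forall>D. D dvd X \<and> D dvd Y \<and> D dvd Z \<longrightarrow> is_unit D)"
  unfolding gcoprime3_def
proof safe
  fix D assume h: "\<forall>d\<in>gauss_ints. gdvd d (emb X) \<and> gdvd d (emb Y) \<and> gdvd d (emb Z) \<longrightarrow> gunit d"
    "D dvd X" "D dvd Y" "D dvd Z"
  thus "is_unit D" using h(1)[rule_format, of "emb D"] by (simp add: gdvd_emb gunit_emb)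
next
  fix d assume h: "\<forall>D. D dvd X \<and> D dvd Y \<and> D dvd Z \<longrightarrow> is_unit D" "d \<in> gauss_ints"
    "gdvd d (emb X)" "gdvd d (emb Y)" "gdvd d (emb Z)"
  then obtain D where "d = emb D" using gauss_ints_emb by blast
  thus "gunit d" using h by (simp add: gdvd_emb gunit_emb)
qed

lemma unit_set_emb: "emb X \<in> {\<i>, -\<i>, 1, -1} \<longleftrightarrow> is_unit X"
proof -
  have "emb X \<in> {\<i>, -\<i>, 1, -1} \<longleftrightarrow> X = ii \<or> X = -ii \<or> X = 1 \<or> X = -1"
    by (auto simp flip: emb_ii emb_1 emb_minus simp add: emb_inj)
  thus ?thesis using is_unit_gi_cases[of X] by auto
qed

lemma z_set_emb: "emb Z \<in> {\<i> * (1 + \<i>), - (\<i> * (1 + \<i>))} \<longleftrightarrow> Z = Gi (-1) 1 \<or> Z = Gi 1 (-1)"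
proof -
  have "\<i> * (1 + \<i>) = emb (Gi (-1) 1)" "- (\<i> * (1 + \<i>)) = emb (Gi 1 (-1))"
    by (simp_all add: complex_eq_iff)
  thus ?thesis by (auto simp: emb_inj)
qed

lemma thm_ii_bwd:
  assumes "is_unit X" "is_unit Y" "Z = Gi (-1) 1 \<or> Z = Gi 1 (-1)"
  shows "X^4 + Y^4 = ii * Z^2 \<and> X * Y * Z \<noteq> 0 \<and> (\<forall>D. D dvd X \<and> D dvd Y \<and> D dvd Z \<longrightarrow> is_unit D)"
proof -
  have "X^4 + Y^4 = ii * Z^2" using unit_pow4[OF assms(1)] unit_pow4[OF assms(2)] assms(3)
    by (auto simp: gi_eq_iff)
  moreover have "X * Y * Z \<noteq> 0"
  proof -
    have "X \<noteq> 0" "Y \<noteq> 0" using assms(1,2) by auto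
    moreover have "Z \<noteq> 0" using assms(3) by (auto simp: gi_eq_iff)
    ultimately show ?thesis by simp
  qed
  moreover have "\<forall>D. D dvd X \<and> D dvd Y \<and> D dvd Z \<longrightarrow> is_unit D"
    using assms(1) by (auto intro: dvd_unit_imp_unit)
  ultimately show ?thesis by blast
qed

theorem theorem1:
  shows "(\<forall>x\<in>gauss_ints. \<forall>y\<in>gauss_ints. \<forall>z\<in>gauss_ints.
            x ^ 4 - y ^ 4 = \<i> * z ^ 2 \<longrightarrow> x * y * z = 0)
       \<and> (\<forall>x\<in>gauss_ints. \<forall>y\<in>gauss_ints. \<forall>z\<in>gauss_ints.
            (x ^ 4 + y ^ 4 = \<i> * z ^ 2 \<and> x * y * z \<noteq> 0 \<and> gcoprime3 x y z)
            \<longleftrightarrow> (x \<in> {\<i>, -\<i>, 1, -1} \<and> y \<in> {\<i>, -\<i>, 1, -1}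
                 \<and> z \<in> {\<i> * (1 + \<i>), - (\<i> * (1 + \<i>))}))"
proof (intro conjI ballI)
  fix x y z assume "x \<in> gauss_ints" "y \<in> gauss_ints" "z \<in> gauss_ints"
  then obtain X Y Z where xyz: "x = emb X" "y = emb Y" "z = emb Z" using gauss_ints_emb by blast
  show "x ^ 4 - y ^ 4 = \<i> * z ^ 2 \<longrightarrow> x * y * z = 0"
  proof
    assume "x ^ 4 - y ^ 4 = \<i> * z ^ 2"
    hence "emb (X^4 - Y^4) = emb (ii * Z^2)" using xyz by simp
    hence "X^4 - Y^4 = ii * Z^2" by (simp only: emb_inj)
    hence "X * Y * Z = 0" by (rule thm_i_gi)
    thus "x * y * z = 0" using xyz by (simp flip: emb_mult)
  qed
next
  fix x y z assume "x \<in> gauss_ints" "y \<in> gauss_ints" "z \<in> gauss_ints"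
  then obtain X Y Z where xyz: "x = emb X" "y = emb Y" "z = emb Z" using gauss_ints_emb by blast
  have e1: "x ^ 4 + y ^ 4 = \<i> * z ^ 2 \<longleftrightarrow> X^4 + Y^4 = ii * Z^2"
  proof -
    have "x ^ 4 + y ^ 4 = \<i> * z ^ 2 \<longleftrightarrow> emb (X^4 + Y^4) = emb (ii * Z^2)" using xyz by simp
    thus ?thesis by (simp only: emb_inj)
  qed
  have e2: "x * y * z \<noteq> 0 \<longleftrightarrow> X * Y * Z \<noteq> 0" using xyz by (simp flip: emb_mult)
  have e3: "gcoprime3 x y z \<longleftrightarrow> (\<forall>D. D dvd X \<and> D dvd Y \<and> D dvd Z \<longrightarrow> is_unit D)"
    using xyz gcoprime3_emb by simp
  show "(x ^ 4 + y ^ 4 = \<i> * z ^ 2 \<and> x * y * z \<noteq> 0 \<and> gcoprime3 x y z)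
            \<longleftrightarrow> (x \<in> {\<i>, -\<i>, 1, -1} \<and> y \<in> {\<i>, -\<i>, 1, -1}
                 \<and> z \<in> {\<i> * (1 + \<i>), - (\<i> * (1 + \<i>))})"
    unfolding e1 e2 e3 unfolding xyz unit_set_emb z_set_emb
    using thm_ii_fwd[of X Y Z] thm_ii_bwd[of X Y Z] by blast
qed


end
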